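(* Consider the online resource allocation model described in the context, with unknown expected rewards $r_1>r_2$ and adversarial arrivals, and let $\alpha=r_2/r_1$. In each of the following two scenarios, the competitive ratio of any deterministic or randomized algorithm is at most $1/(2-\alpha)$: (Scenario 1) the sampling probability is $p=0$, so no sample information is available; (Scenario 2) sample information is available but the sampling probability $p\in(0,1)$ is completely unknown to the decision-maker.
   Context: Model: a decision-maker has $m$ units of a divisible resource to allocate to unit-demand agents of two types; an accepted type-$i$ agent ($i\in\{1,2\}$) yields a reward in $\{0,1\}$ with mean $r_i\in(0,1)$, $r_1>r_2$, unknown to the decision-maker. An adversary chooses integers $h,\ell\ge0$. Each of the $h+\ell$ agents is independently sampled with probability $p$; $s_1\sim\mathrm{Bin}(h,p)$, $s_2\sim\mathrm{Bin}(\ell,p)$ are the sampled counts, and sampled agents reveal their realized rewards; $\psi$ is this sample information. The remaining $n_1=h-s_1$ type 1 and $n_2=\ell-s_2$ type 2 agents arrive online in an adversarial order $I$; on each arrival the type is observed and the decision-maker irrevocably accepts (possibly fractionally) or rejects, total allocation at most $m$. $\mathrm{OPT}(I)=r_1\min\{n_1,m\}+r_2\min\{n_2,(m-n_1)^+\}$. The competitive ratio of an algorithm $A$ is $\inf_{(h,\ell)}\mathbb E_\psi[\inf_I\mathbb E[\mathrm{REW}_A(I,\psi)]/\mathrm{OPT}(I)]$ (in Scenario 2 the worst case is also over the unknown $p$), where $\mathrm{REW}_A$ is its cumulative expected reward. *)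

theory Defs
  imports "HOL-Probability.Probability"
begin

datatype atype = Ty1 | Ty2

definition rew :: "real \<Rightarrow> real \<Rightarrow> atype \<Rightarrow> real" where
  "rew r1 r2 t = (case t of Ty1 \<Rightarrow> r1 | Ty2 \<Rightarrow> r2)"

(* Sample information psi = (realized rewards of the sampled type-1 agents,
   realized rewards of the sampled type-2 agents).  s1 ~ Bin(h,p), s2 ~ Bin(l,p),
   each sampled type-i agent reveals an independent Bernoulli(r_i) reward. *)
type_synonym sample_info = "bool list \<times> bool list"

definition sample_pmf :: "real \<Rightarrow> real \<Rightarrow> real \<Rightarrow> nat \<Rightarrow> nat \<Rightarrow> sample_info pmf" where
  "sample_pmf p r1 r2 h l =
     bind_pmf (binomial_pmf h p) (\<lambda>s1.
     bind_pmf (binomial_pmf l p) (\<lambda>s2.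
     bind_pmf (replicate_pmf s1 (bernoulli_pmf r1)) (\<lambda>xs.
     bind_pmf (replicate_pmf s2 (bernoulli_pmf r2)) (\<lambda>ys.
     return_pmf (xs, ys)))))"

(* number of remaining (online) agents of each type *)
definition n1_of :: "nat \<Rightarrow> sample_info \<Rightarrow> nat" where
  "n1_of h \<psi> = h - length (fst \<psi>)"

definition n2_of :: "nat \<Rightarrow> sample_info \<Rightarrow> nat" where
  "n2_of l \<psi> = l - length (snd \<psi>)"

definition orders :: "nat \<Rightarrow> nat \<Rightarrow> atype list set" where
  "orders n1 n2 = {I. length (filter (\<lambda>t. t = Ty1) I) = n1 \<and> length (filter (\<lambda>t. t = Ty2) I) = n2}"

definition OPT :: "real \<Rightarrow> real \<Rightarrow> real \<Rightarrow> atype list \<Rightarrow> real" where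
  "OPT m r1 r2 I =
     (let n1 = real (length (filter (\<lambda>t. t = Ty1) I));
          n2 = real (length (filter (\<lambda>t. t = Ty2) I))
      in r1 * min n1 m + r2 * min n2 (max (m - n1) 0))"

(* A deterministic online policy maps the history of observed types (the prefix of the
   arrival sequence up to and including the current agent) to the (fractional)
   amount allocated to the current agent. *)
definition det_reward :: "real \<Rightarrow> real \<Rightarrow> (atype list \<Rightarrow> real) \<Rightarrow> atype list \<Rightarrow> real" where
  "det_reward r1 r2 f I = (\<Sum>j<length I. rew r1 r2 (I ! j) * f (take (Suc j) I))"

definition feasible_policy :: "real \<Rightarrow> (atype list \<Rightarrow> real) \<Rightarrow> bool" where
  "feasible_policy m f \<longleftrightarrow>
     (\<forall>xs. 0 \<le> f xs \<and> f xs \<le> 1) \<and>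
     (\<forall>I. (\<Sum>j<length I. f (take (Suc j) I)) \<le> m)"

(* A (possibly randomized) algorithm: internal randomness omega drawn from the
   probability space M, and for each omega and sample information psi a feasible
   deterministic online policy. *)
definition is_algorithm :: "real \<Rightarrow> 'w measure \<Rightarrow> ('w \<Rightarrow> sample_info \<Rightarrow> atype list \<Rightarrow> real) \<Rightarrow> bool" where
  "is_algorithm m M A \<longleftrightarrow>
     prob_space M \<and>
     (\<forall>\<psi> xs. (\<lambda>\<omega>. A \<omega> \<psi> xs) \<in> borel_measurable M) \<and>
     (\<forall>\<omega> \<psi>. feasible_policy m (A \<omega> \<psi>))"

definition REW :: "real \<Rightarrow> real \<Rightarrow> 'w measure \<Rightarrow> ('w \<Rightarrow> sample_info \<Rightarrow> atype list \<Rightarrow> real)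
                   \<Rightarrow> sample_info \<Rightarrow> atype list \<Rightarrow> real" where
  "REW r1 r2 M A \<psi> I = (\<integral>\<omega>. det_reward r1 r2 (A \<omega> \<psi>) I \<partial>M)"

(* ratio REW/OPT, with the convention 0/0 = 1 (only for the empty instance) *)
definition ratio :: "real \<Rightarrow> real \<Rightarrow> real \<Rightarrow> 'w measure \<Rightarrow> ('w \<Rightarrow> sample_info \<Rightarrow> atype list \<Rightarrow> real)
                   \<Rightarrow> sample_info \<Rightarrow> atype list \<Rightarrow> real" where
  "ratio m r1 r2 M A \<psi> I =
     (if OPT m r1 r2 I = 0 then 1 else REW r1 r2 M A \<psi> I / OPT m r1 r2 I)"

definition comp_ratio :: "real \<Rightarrow> real \<Rightarrow> real \<Rightarrow> real \<Rightarrow> 'w measure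
                   \<Rightarrow> ('w \<Rightarrow> sample_info \<Rightarrow> atype list \<Rightarrow> real) \<Rightarrow> real" where
  "comp_ratio m r1 r2 p M A =
     (INF hl \<in> (UNIV :: (nat \<times> nat) set).
        measure_pmf.expectation (sample_pmf p r1 r2 (fst hl) (snd hl))
          (\<lambda>\<psi>. INF I \<in> orders (n1_of (fst hl) \<psi>) (n2_of (snd hl) \<psi>). ratio m r1 r2 M A \<psi> I))"

end

theory Submission
  imports Defs
begin



lemma map_len_sample:
  "map_pmf (\<lambda>\<psi>. (length (fst \<psi>), length (snd \<psi>))) (sample_pmf p r1 r2 h l)
     = pair_pmf (binomial_pmf h p) (binomial_pmf l p)"
proof -
  have inner: "bind_pmf (replicate_pmf s1 (bernoulli_pmf r1)) (\<lambda>xs.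
     bind_pmf (replicate_pmf s2 (bernoulli_pmf r2)) (\<lambda>ys. return_pmf (length xs, length ys)))
     = return_pmf (s1, s2)" for s1 s2
  proof -
    have "bind_pmf (replicate_pmf s1 (bernoulli_pmf r1)) (\<lambda>xs.
     bind_pmf (replicate_pmf s2 (bernoulli_pmf r2)) (\<lambda>ys. return_pmf (length xs, length ys)))
     = bind_pmf (replicate_pmf s1 (bernoulli_pmf r1)) (\<lambda>xs.
     bind_pmf (replicate_pmf s2 (bernoulli_pmf r2)) (\<lambda>ys. return_pmf (s1, s2)))"
      by (intro bind_pmf_cong refl) (auto simp: set_replicate_pmf)
    then show ?thesis by (simp add: bind_pmf_const)
  qed
  show ?thesis
    unfolding sample_pmf_def pair_pmf_def map_bind_pmf map_return_pmf fst_conv snd_conv inner ..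
qed

lemma pmf_sample0:
  assumes "0 \<le> p" "p \<le> 1"
  shows "pmf (sample_pmf p r1 r2 h l) ([],[]) = (1-p)^h * (1-p)^l"
proof -
  have "pmf (map_pmf (\<lambda>\<psi>. (length (fst \<psi>), length (snd \<psi>))) (sample_pmf p r1 r2 h l)) (0,0)
     = measure (sample_pmf p r1 r2 h l) {([],[])}"
    unfolding pmf_map by (rule arg_cong[where f="measure _"]) auto
  then show ?thesis using assms by (simp add: map_len_sample pmf_pair measure_pmf_single)
qed


definition wsum :: "(atype \<Rightarrow> real) \<Rightarrow> (atype list \<Rightarrow> real) \<Rightarrow> atype list \<Rightarrow> real" where
  "wsum w f I = (\<Sum>j<length I. w (I!j) * f (take (Suc j) I))"

lemma sum_lessThan_add_split:
  "(\<Sum>j<a+b. g j) = (\<Sum>j<a. g j) + (\<Sum>j<b. g (a+j))" for g :: "nat \<Rightarrow> real"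
  by (induction b) (simp_all add: add.assoc)

lemma wsum_append:
  "wsum w f (xs @ ys) = wsum w f xs + (\<Sum>j<length ys. w (ys!j) * f (xs @ take (Suc j) ys))"
proof -
  have "wsum w f (xs @ ys) = (\<Sum>j<length xs + length ys. w ((xs@ys)!j) * f (take (Suc j) (xs@ys)))"
    by (simp add: wsum_def)
  also have "\<dots> = (\<Sum>j<length xs. w ((xs@ys)!j) * f (take (Suc j) (xs@ys)))
     + (\<Sum>j<length ys. w ((xs@ys)!(length xs + j)) * f (take (Suc (length xs + j)) (xs@ys)))"
    by (rule sum_lessThan_add_split)
  also have "(\<Sum>j<length xs. w ((xs@ys)!j) * f (take (Suc j) (xs@ys))) = wsum w f xs"
    unfolding wsum_def by (intro sum.cong refl) (simp add: nth_append)
  also have "(\<Sum>j<length ys. w ((xs@ys)!(length xs + j)) * f (take (Suc (length xs + j)) (xs@ys)))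
      = (\<Sum>j<length ys. w (ys!j) * f (xs @ take (Suc j) ys))"
    by (intro sum.cong refl) (simp add: nth_append take_append Suc_diff_le)
  finally show ?thesis .
qed

lemma wsum_replicate:
  fixes w :: "atype \<Rightarrow> real"
  shows
  "(\<Sum>j<n. w (replicate n t ! j) * f (xs @ take (Suc j) (replicate n t)))
   = w t * (\<Sum>j<n. f (xs @ replicate (Suc j) t))"
  by (simp add: sum_distrib_left)

lemma det_reward_wsum: "det_reward r1 r2 f I = wsum (rew r1 r2) f I"
  by (simp add: det_reward_def wsum_def)

lemma feas_wsum: "(\<Sum>j<length I. f (take (Suc j) I)) = wsum (\<lambda>_. 1) f I"
  by (simp add: wsum_def)



lemma alg_prob: "is_algorithm m M A \<Longrightarrow> prob_space M"
  by (simp add: is_algorithm_def)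
lemma alg_meas: "is_algorithm m M A \<Longrightarrow> (\<lambda>\<omega>. A \<omega> \<psi> xs) \<in> borel_measurable M"
  unfolding is_algorithm_def by blast
lemma alg_feas: "is_algorithm m M A \<Longrightarrow> feasible_policy m (A \<omega> \<psi>)"
  unfolding is_algorithm_def by blast
lemma alg_0: assumes "is_algorithm m M A" shows "0 \<le> A \<omega> \<psi> xs"
  using alg_feas[OF assms, of \<omega> \<psi>] unfolding feasible_policy_def by blast
lemma alg_1: assumes "is_algorithm m M A" shows "A \<omega> \<psi> xs \<le> 1"
  using alg_feas[OF assms, of \<omega> \<psi>] unfolding feasible_policy_def by blast
lemma alg_sum: assumes "is_algorithm m M A" shows "(\<Sum>j<length I. A \<omega> \<psi> (take (Suc j) I)) \<le> m"
  using alg_feas[OF assms, of \<omega> \<psi>] unfolding feasible_policy_def by blast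

lemma integrable_alg:
  assumes "is_algorithm m M A"
  shows "integrable M (\<lambda>\<omega>. wsum w (A \<omega> \<psi>) I)"
proof -
  interpret prob_space M using assms by (simp add: is_algorithm_def)
  have b: "integrable M (\<lambda>\<omega>. A \<omega> \<psi> xs)" for xs
    apply (rule integrable_const_bound[where B=1])
    using alg_0[OF assms] alg_1[OF assms] alg_meas[OF assms] by auto
  show ?thesis unfolding wsum_def
    using b by auto
qed

lemma REW_nonneg:
  assumes "is_algorithm m M A" "0 \<le> r1" "0 \<le> r2"
  shows "0 \<le> REW r1 r2 M A \<psi> I"
  unfolding REW_def det_reward_def
  using assms alg_0[OF assms(1)]
  by (intro integral_nonneg_AE AE_I2 sum_nonneg mult_nonneg_nonneg)
     (auto simp: rew_def split: atype.split)

lemma REW_le: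
  assumes "is_algorithm m M A" "0 \<le> r2" "r2 \<le> r1"
  shows "REW r1 r2 M A \<psi> I \<le> r1 * m"
proof -
  interpret prob_space M using assms by (simp add: is_algorithm_def)
  have pt: "det_reward r1 r2 (A \<omega> \<psi>) I \<le> r1 * m" for \<omega>
  proof -
    have f: "feasible_policy m (A \<omega> \<psi>)" using alg_feas[OF assms(1)] .
    have "det_reward r1 r2 (A \<omega> \<psi>) I \<le> (\<Sum>j<length I. r1 * A \<omega> \<psi> (take (Suc j) I))"
      unfolding det_reward_def
      using f assms by (intro sum_mono mult_right_mono)
        (auto simp: rew_def feasible_policy_def split: atype.split)
    also have "\<dots> = r1 * (\<Sum>j<length I. A \<omega> \<psi> (take (Suc j) I))"
      by (simp add: sum_distrib_left)
    also have "\<dots> \<le> r1 * m"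
      using f assms by (intro mult_left_mono) (auto simp: feasible_policy_def)
    finally show ?thesis .
  qed
  have "REW r1 r2 M A \<psi> I \<le> (\<integral>\<omega>. r1 * m \<partial>M)"
    unfolding REW_def
    using integrable_alg[OF assms(1), of "rew r1 r2" \<psi> I] pt
    by (intro integral_mono) (auto simp: det_reward_wsum)
  also have "\<dots> = r1 * m" by (simp add: prob_space)
  finally show ?thesis .
qed

lemma OPT_nonneg:
  assumes "0 < m" "0 \<le> r1" "0 \<le> r2"
  shows "0 \<le> OPT m r1 r2 I"
  using assms unfolding OPT_def Let_def
  by (intro add_nonneg_nonneg mult_nonneg_nonneg) auto

lemma OPT_pos_bound:
  assumes "0 < m" "0 < r2" "r2 < r1" "OPT m r1 r2 I \<noteq> 0"
  shows "r2 * min 1 m \<le> OPT m r1 r2 I"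
proof -
  define a where "a = length (filter (\<lambda>t. t = Ty1) I)"
  define b where "b = length (filter (\<lambda>t. t = Ty2) I)"
  have O: "OPT m r1 r2 I = r1 * min (real a) m + r2 * min (real b) (max (m - real a) 0)"
    unfolding OPT_def a_def b_def Let_def ..
  show ?thesis
  proof (cases "a = 0")
    case True
    then have O2: "OPT m r1 r2 I = r2 * min (real b) m" using O assms by simp
    then have "b \<noteq> 0" using assms by auto
    then have "min 1 m \<le> min (real b) m" by auto
    then show ?thesis using O2 assms by (simp add: mult_left_mono)
  next
    case False
    then have "min 1 m \<le> min (real a) m" by auto
    then have "r2 * min 1 m \<le> r1 * min (real a) m"
      using assms by (intro mult_mono) auto
    moreover have "0 \<le> r2 * min (real b) (max (m - real a) 0)" using assms by auto
    ultimately show ?thesis using O by linarith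
  qed
qed

definition Cb :: "real \<Rightarrow> real \<Rightarrow> real \<Rightarrow> real" where
  "Cb m r1 r2 = max 1 (r1 * m / (r2 * min 1 m))"

lemma ratio_bounds:
  assumes "0 < m" "0 < r2" "r2 < r1" "is_algorithm m M A"
  shows "0 \<le> ratio m r1 r2 M A \<psi> I" "ratio m r1 r2 M A \<psi> I \<le> Cb m r1 r2"
proof -
  have R0: "0 \<le> REW r1 r2 M A \<psi> I" using REW_nonneg[OF assms(4)] assms by auto
  have R1: "REW r1 r2 M A \<psi> I \<le> r1 * m" using REW_le[OF assms(4)] assms by auto
  have O0: "0 \<le> OPT m r1 r2 I" using OPT_nonneg assms by auto
  show "0 \<le> ratio m r1 r2 M A \<psi> I" unfolding ratio_def using R0 O0 by auto
  show "ratio m r1 r2 M A \<psi> I \<le> Cb m r1 r2"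
  proof (cases "OPT m r1 r2 I = 0")
    case True then show ?thesis by (simp add: ratio_def Cb_def)
  next
    case False
    have lb: "r2 * min 1 m \<le> OPT m r1 r2 I" using OPT_pos_bound assms False by auto
    have pos: "0 < r2 * min 1 m" using assms by auto
    have opos: "0 < OPT m r1 r2 I" using pos lb by linarith
    have "REW r1 r2 M A \<psi> I / OPT m r1 r2 I \<le> r1 * m / OPT m r1 r2 I"
      using R1 pos lb by (intro divide_right_mono) auto
    also have "\<dots> \<le> r1 * m / (r2 * min 1 m)"
      using pos lb assms opos by (intro divide_left_mono) (auto intro: mult_pos_pos)
    finally show ?thesis using False by (simp add: ratio_def Cb_def)
  qed
qed

lemma orders_ne: "replicate a Ty1 @ replicate b Ty2 \<in> orders a b"
  by (simp add: orders_def)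

lemma Phi_bounds:
  assumes "0 < m" "0 < r2" "r2 < r1" "is_algorithm m M A"
  shows "0 \<le> (INF I \<in> orders a b. ratio m r1 r2 M A \<psi> I)"
    "(INF I \<in> orders a b. ratio m r1 r2 M A \<psi> I) \<le> Cb m r1 r2"
    "I \<in> orders a b \<Longrightarrow> (INF I \<in> orders a b. ratio m r1 r2 M A \<psi> I) \<le> ratio m r1 r2 M A \<psi> I"
proof -
  have ne: "orders a b \<noteq> {}" using orders_ne by blast
  have bdd: "bdd_below ((\<lambda>I. ratio m r1 r2 M A \<psi> I) ` orders a b)"
    using ratio_bounds[OF assms] by (intro bdd_belowI2[where m=0]) auto
  show "0 \<le> (INF I \<in> orders a b. ratio m r1 r2 M A \<psi> I)"
    using ratio_bounds[OF assms] ne by (intro cINF_greatest) auto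
  show "I \<in> orders a b \<Longrightarrow> (INF I \<in> orders a b. ratio m r1 r2 M A \<psi> I) \<le> ratio m r1 r2 M A \<psi> I"
    using bdd by (rule cINF_lower)
  have "(INF I \<in> orders a b. ratio m r1 r2 M A \<psi> I) \<le> ratio m r1 r2 M A \<psi> (replicate a Ty1 @ replicate b Ty2)"
    using bdd orders_ne by (rule cINF_lower)
  also have "\<dots> \<le> Cb m r1 r2" using ratio_bounds[OF assms] by auto
  finally show "(INF I \<in> orders a b. ratio m r1 r2 M A \<psi> I) \<le> Cb m r1 r2" .
qed

lemma pmf_expect_bound:
  fixes P :: "'a pmf" and g :: "'a \<Rightarrow> real"
  assumes "\<And>x. 0 \<le> g x" "\<And>x. g x \<le> C"
  shows "measure_pmf.expectation P g \<le> g x0 + C * (1 - pmf P x0)"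
proof -
  have ig: "integrable P g"
    apply (rule measure_pmf.integrable_const_bound[where B=C])
    using assms by auto
  have pt: "g x \<le> g x0 * indicator {x0} x + C * indicator (UNIV - {x0}) x" for x
    using assms[of x] by (auto simp: indicator_def)
  have ih: "integrable P (\<lambda>x. g x0 * indicator {x0} x + C * indicator (UNIV - {x0}) x)"
    apply (rule measure_pmf.integrable_const_bound[where B="\<bar>g x0\<bar> + \<bar>C\<bar>"])
    by (auto simp: indicator_def)
  have "measure_pmf.expectation P g \<le> measure_pmf.expectation P (\<lambda>x. g x0 * indicator {x0} x + C * indicator (UNIV - {x0}) x)"
    using ig ih pt by (intro integral_mono) auto
  also have "\<dots> = g x0 * pmf P x0 + C * (1 - pmf P x0)"
  proof -
    have ii: "integrable P (indicator S :: _ \<Rightarrow> real)" for S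
      by (rule measure_pmf.integrable_const_bound[where B=1]) (auto simp: indicator_def)
    show ?thesis
      using measure_pmf.prob_compl[of "{x0}" P]
      by (simp add: integral_add ii measure_pmf_single)
  qed
  also have "\<dots> \<le> g x0 + C * (1 - pmf P x0)"
    using assms[of x0] pmf_le_1[of P x0] by (simp add: mult_left_le)
  finally show ?thesis .
qed



lemma integrable_A:
  assumes "is_algorithm m M A"
  shows "integrable M (\<lambda>\<omega>. A \<omega> \<psi> xs)"
proof -
  interpret prob_space M using alg_prob[OF assms] .
  show ?thesis
    apply (rule integrable_const_bound[where B=1])
    using alg_0[OF assms] alg_1[OF assms] alg_meas[OF assms] by auto
qed

lemma wsum_rep2: "wsum w f (replicate N Ty2) = w Ty2 * (\<Sum>j<N. f (replicate (Suc j) Ty2))"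
  for w :: "atype \<Rightarrow> real"
  using wsum_append[of w f "[]" "replicate N Ty2"] wsum_replicate[of w N Ty2 f "[]"]
  by (simp add: wsum_def)

lemma wsum_rep12: "wsum w f (replicate N Ty2 @ replicate N Ty1) =
   w Ty2 * (\<Sum>j<N. f (replicate (Suc j) Ty2)) + w Ty1 * (\<Sum>j<N. f (replicate N Ty2 @ replicate (Suc j) Ty1))"
  for w :: "atype \<Rightarrow> real"
  using wsum_append[of w f "replicate N Ty2" "replicate N Ty1"] wsum_replicate[of w N Ty1 f "replicate N Ty2"]
    wsum_rep2[of w f N]
  by simp

lemma key_ratio:
  assumes m: "0 < m" and r: "0 < r2" "r2 < r1" and alg: "is_algorithm m M A"
    and N: "m \<le> real N"
  shows "min (ratio m r1 r2 M A ([],[]) (replicate N Ty2))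
             (ratio m r1 r2 M A ([],[]) (replicate N Ty2 @ replicate N Ty1)) \<le> 1 / (2 - r2 / r1)"
proof -
  interpret prob_space M using alg_prob[OF alg] .
  define X where "X \<omega> = (\<Sum>j<N. A \<omega> ([],[]) (replicate (Suc j) Ty2))" for \<omega>
  define Y where "Y \<omega> = (\<Sum>j<N. A \<omega> ([],[]) (replicate N Ty2 @ replicate (Suc j) Ty1))" for \<omega>
  have iX: "integrable M X" unfolding X_def using integrable_A[OF alg] by auto
  have iY: "integrable M Y" unfolding Y_def using integrable_A[OF alg] by auto
  have X0: "0 \<le> X \<omega>" for \<omega> unfolding X_def using alg_0[OF alg] by (auto intro: sum_nonneg)
  have XY: "X \<omega> + Y \<omega> \<le> m" for \<omega>
    using alg_sum[OF alg, where I="replicate N Ty2 @ replicate N Ty1" and \<omega>=\<omega> and \<psi>="([],[])"]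
    unfolding feas_wsum wsum_rep12 X_def Y_def by simp
  define eX where "eX = integral\<^sup>L M X"
  define eY where "eY = integral\<^sup>L M Y"
  have eX0: "0 \<le> eX" unfolding eX_def using X0 by (auto intro: integral_nonneg_AE)
  have eXY: "eX + eY \<le> m"
  proof -
    have "eX + eY = integral\<^sup>L M (\<lambda>\<omega>. X \<omega> + Y \<omega>)" unfolding eX_def eY_def
      using iX iY by simp
    also have "\<dots> \<le> integral\<^sup>L M (\<lambda>\<omega>. m)" using iX iY XY by (intro integral_mono) auto
    also have "\<dots> = m" by (simp add: prob_space)
    finally show ?thesis .
  qed
  have REW1: "REW r1 r2 M A ([],[]) (replicate N Ty2) = r2 * eX"
    unfolding REW_def det_reward_wsum wsum_rep2 eX_def X_def[symmetric] by (simp add: rew_def)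
  have REW2: "REW r1 r2 M A ([],[]) (replicate N Ty2 @ replicate N Ty1) = r2 * eX + r1 * eY"
    unfolding REW_def det_reward_wsum wsum_rep12 eX_def eY_def X_def[symmetric] Y_def[symmetric]
    using iX iY by (simp add: rew_def)
  have OPT1: "OPT m r1 r2 (replicate N Ty2) = r2 * m"
    using N m by (simp add: OPT_def)
  have OPT2: "OPT m r1 r2 (replicate N Ty2 @ replicate N Ty1) = r1 * m"
    using N m by (simp add: OPT_def)
  have R1: "ratio m r1 r2 M A ([],[]) (replicate N Ty2) = eX / m"
    unfolding ratio_def OPT1 REW1 using m r by auto
  have R2: "ratio m r1 r2 M A ([],[]) (replicate N Ty2 @ replicate N Ty1) = (r2/r1) * (eX / m) + eY / m"
    unfolding ratio_def OPT2 REW2 using m r by (auto simp: field_simps)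
  define t where "t = eX / m"
  define a where "a = r2 / r1"
  define B where "B = 1 / (2 - a)"
  have a01: "0 < a" "a < 1" unfolding a_def using r by auto
  have Bdef: "B * (2 - a) = 1" unfolding B_def using a01 by auto
  have eYm: "eY / m \<le> 1 - t" unfolding t_def using eXY m by (simp add: field_simps)
  show ?thesis
  proof (cases "t \<le> B")
    case True then show ?thesis unfolding R1 t_def B_def a_def by simp
  next
    case False
    have "(1 - a) * B < (1 - a) * t" using False a01 by (intro mult_strict_left_mono) auto
    then have "a * t + eY / m < B" using eYm Bdef by (simp add: algebra_simps)
    then show ?thesis unfolding R2 t_def[symmetric] a_def[symmetric] B_def[symmetric] by simp
  qed
qed



lemma expect_nonneg:
  assumes "0 < m" "0 < r2" "r2 < r1" "is_algorithm m M A"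
  shows "0 \<le> measure_pmf.expectation (sample_pmf p r1 r2 h l)
          (\<lambda>\<psi>. INF I \<in> orders (n1_of h \<psi>) (n2_of l \<psi>). ratio m r1 r2 M A \<psi> I)"
  using Phi_bounds(1)[OF assms] by (intro integral_nonneg_AE AE_I2) auto

lemma comp_nonneg:
  assumes "0 < m" "0 < r2" "r2 < r1" "is_algorithm m M A"
  shows "0 \<le> comp_ratio m r1 r2 p M A"
  unfolding comp_ratio_def using expect_nonneg[OF assms] by (intro cINF_greatest) auto

lemma comp_le_expect:
  assumes "0 < m" "0 < r2" "r2 < r1" "is_algorithm m M A"
  shows "comp_ratio m r1 r2 p M A \<le> measure_pmf.expectation (sample_pmf p r1 r2 h l)
          (\<lambda>\<psi>. INF I \<in> orders (n1_of h \<psi>) (n2_of l \<psi>). ratio m r1 r2 M A \<psi> I)"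
proof -
  have "bdd_below ((\<lambda>hl. measure_pmf.expectation (sample_pmf p r1 r2 (fst hl) (snd hl))
          (\<lambda>\<psi>. INF I \<in> orders (n1_of (fst hl) \<psi>) (n2_of (snd hl) \<psi>). ratio m r1 r2 M A \<psi> I)) ` UNIV)"
    using expect_nonneg[OF assms] by (intro bdd_belowI2[where m=0]) auto
  from cINF_lower[OF this, of "(h,l)"] show ?thesis unfolding comp_ratio_def by simp
qed

lemma expect_le:
  assumes "0 < m" "0 < r2" "r2 < r1" "is_algorithm m M A" "0 \<le> p" "p \<le> 1"
    and I: "I \<in> orders h l"
  shows "measure_pmf.expectation (sample_pmf p r1 r2 h l)
          (\<lambda>\<psi>. INF I \<in> orders (n1_of h \<psi>) (n2_of l \<psi>). ratio m r1 r2 M A \<psi> I)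
     \<le> ratio m r1 r2 M A ([],[]) I + Cb m r1 r2 * (real (h + l) * p)"
proof -
  let ?g = "\<lambda>\<psi>. INF I \<in> orders (n1_of h \<psi>) (n2_of l \<psi>). ratio m r1 r2 M A \<psi> I"
  have e1: "measure_pmf.expectation (sample_pmf p r1 r2 h l) ?g
     \<le> ?g ([],[]) + Cb m r1 r2 * (1 - pmf (sample_pmf p r1 r2 h l) ([],[]))"
    using Phi_bounds(1,2)[OF assms(1-4)] by (intro pmf_expect_bound) auto
  have e2: "?g ([],[]) \<le> ratio m r1 r2 M A ([],[]) I"
    using Phi_bounds(3)[OF assms(1-4)] I by (simp add: n1_of_def n2_of_def)
  have e3: "1 - pmf (sample_pmf p r1 r2 h l) ([],[]) \<le> real (h + l) * p"
  proof -
    have "1 + real (h + l) * (- p) \<le> (1 + (-p)) ^ (h + l)"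
      using assms by (intro Bernoulli_inequality) auto
    then show ?thesis using pmf_sample0[OF assms(5,6)] by (simp add: power_add)
  qed
  have C0: "0 \<le> Cb m r1 r2" unfolding Cb_def by simp
  have e4: "Cb m r1 r2 * (1 - pmf (sample_pmf p r1 r2 h l) ([],[])) \<le> Cb m r1 r2 * (real (h + l) * p)"
    using C0 e3 by (rule mult_left_mono[rotated])
  show ?thesis using e1 e2 e4 by linarith
qed

lemma main_bound:
  assumes m: "0 < m" and r: "0 < r2" "r2 < r1" and alg: "is_algorithm m M A" and p: "0 \<le> p" "p \<le> 1"
  shows "comp_ratio m r1 r2 p M A \<le> 1 / (2 - r2 / r1) + Cb m r1 r2 * (real (2 * nat \<lceil>m\<rceil>) * p)"
proof -
  define N where "N = nat \<lceil>m\<rceil>"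
  have N: "m \<le> real N" unfolding N_def by linarith
  have C0: "0 \<le> Cb m r1 r2" unfolding Cb_def by simp
  have o1: "replicate N Ty2 \<in> orders 0 N" by (simp add: orders_def)
  have o2: "replicate N Ty2 @ replicate N Ty1 \<in> orders N N" by (simp add: orders_def)
  have a: "comp_ratio m r1 r2 p M A \<le> ratio m r1 r2 M A ([],[]) (replicate N Ty2) + Cb m r1 r2 * (real (0 + N) * p)"
    using comp_le_expect[OF m r alg, of p 0 N] expect_le[OF m r alg p o1] by linarith
  have b: "comp_ratio m r1 r2 p M A \<le> ratio m r1 r2 M A ([],[]) (replicate N Ty2 @ replicate N Ty1) + Cb m r1 r2 * (real (N + N) * p)"
    using comp_le_expect[OF m r alg, of p N N] expect_le[OF m r alg p o2] by linarith
  have c: "Cb m r1 r2 * (real (0 + N) * p) \<le> Cb m r1 r2 * (real (2 * N) * p)"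
    using C0 p by (intro mult_left_mono mult_right_mono) auto
  have c2: "real (N + N) = real (2 * N)" by simp
  show ?thesis using key_ratio[OF m r alg N] a b c unfolding N_def[symmetric] c2
    by linarith
qed

theorem proposition1:
  fixes m r1 r2 :: real
    and M :: "'w measure"
    and A :: "'w \<Rightarrow> sample_info \<Rightarrow> atype list \<Rightarrow> real"
  assumes "0 < m"
    and "0 < r2" and "r2 < r1" and "r1 < 1"
    and "is_algorithm m M A"
  shows "comp_ratio m r1 r2 0 M A \<le> 1 / (2 - r2 / r1)
       \<and> (INF p \<in> {0<..<1}. comp_ratio m r1 r2 p M A) \<le> 1 / (2 - r2 / r1)"
proof
  show "comp_ratio m r1 r2 0 M A \<le> 1 / (2 - r2 / r1)"
    using main_bound[OF assms(1-3,5), of 0] by simp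
next
  define B where "B = 1 / (2 - r2 / r1)"
  define K where "K = Cb m r1 r2 * real (2 * nat \<lceil>m\<rceil>) + 1"
  have K: "0 < K" unfolding K_def Cb_def by (auto intro!: add_nonneg_pos)
  define J where "J = (INF p \<in> {0<..<1}. comp_ratio m r1 r2 p M A)"
  have bdd: "bdd_below ((\<lambda>p. comp_ratio m r1 r2 p M A) ` {0<..<1})"
    using comp_nonneg[OF assms(1-3,5)] by (intro bdd_belowI2[where m=0]) auto
  show "J \<le> B" unfolding J_def[symmetric] B_def[symmetric]
  proof (rule ccontr)
    assume "\<not> J \<le> B"
    then have eps: "0 < J - B" by simp
    define p where "p = min (1/2) ((J - B) / (2 * K))"
    have p0: "0 < p" unfolding p_def using eps K by auto
    have p1: "p < 1" unfolding p_def by auto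
    have "J \<le> comp_ratio m r1 r2 p M A" unfolding J_def using bdd p0 p1 by (intro cINF_lower) auto
    also have "\<dots> \<le> B + Cb m r1 r2 * (real (2 * nat \<lceil>m\<rceil>) * p)"
      using main_bound[OF assms(1-3,5), of p] p0 p1 unfolding B_def by simp
    also have "\<dots> \<le> B + K * p" unfolding K_def using p0 by (simp add: algebra_simps)
    also have "K * p \<le> K * ((J - B) / (2 * K))" unfolding p_def using K by (intro mult_left_mono) auto
    also have "K * ((J - B) / (2 * K)) = (J - B) / 2" using K by simp
    finally have "J \<le> B + (J - B) / 2" by simp
    then show False using eps by (simp add: field_simps)
  qed
qed


end
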